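(* (a) For every $e\in E$ there exist $i,c,d\in\mathbb{Z}$ with $c,d\geq0$ such that $e=c\epsilon^i+d\epsilon^{i+1}$. (b) Every $e\in E$ is represented over $\mathcal{O}_K$ by the 8-ary form $x_1^2+x_2^2+x_3^2+x_4^2+\epsilon(x_5^2+x_6^2+x_7^2+x_8^2)$, i.e., $e$ equals this form evaluated at some $x_1,\dots,x_8\in\mathcal{O}_K$.
   Context: $D>1$ squarefree, $K=\mathbb{Q}(\sqrt D)$, $\mathcal{O}_K$ its ring of integers. $\epsilon$ is the totally positive fundamental unit of $\mathcal{O}_K$ (the smallest unit $>1$ whose conjugate is also positive; it has norm $1$). $E=\mathbb{N}_0[\epsilon,\epsilon^{-1}]$ is the set of all finite sums $\sum_{i=i_0}^{i_1}e_i\epsilon^i$ with $i_0,i_1\in\mathbb{Z}$ and integers $e_i\geq0$. *)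

theory Defs
  imports "HOL-Analysis.Analysis" "HOL-Computational_Algebra.Computational_Algebra"
begin

definition quad_field :: "int \<Rightarrow> real set" where
  "quad_field D = {of_rat p + of_rat q * sqrt (real_of_int D) | p q. True}"

definition ring_of_integers :: "int \<Rightarrow> real set" where
  "ring_of_integers D = {x \<in> quad_field D. algebraic_int x}"

definition qconj :: "int \<Rightarrow> real \<Rightarrow> real" where
  "qconj D x = (THE y. \<exists>p q. x = of_rat p + of_rat q * sqrt (real_of_int D)
                              \<and> y = of_rat p - of_rat q * sqrt (real_of_int D))"

definition units_OK :: "int \<Rightarrow> real set" where
  "units_OK D = {u \<in> ring_of_integers D. u \<noteq> 0 \<and> inverse u \<in> ring_of_integers D}"

definition tp_fund_unit :: "int \<Rightarrow> real \<Rightarrow> bool" where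
  "tp_fund_unit D \<epsilon> \<longleftrightarrow> \<epsilon> \<in> units_OK D \<and> \<epsilon> > 1 \<and> qconj D \<epsilon> > 0 \<and>
     (\<forall>u \<in> units_OK D. u > 1 \<and> qconj D u > 0 \<longrightarrow> \<epsilon> \<le> u)"

text \<open>E = N_0[eps, eps^-1]: finite sums of e_i eps^i with e_i \<ge> 0 integers.\<close>
definition semiring_E :: "real \<Rightarrow> real set" where
  "semiring_E \<epsilon> = {(\<Sum>k<n. real (c k) * \<epsilon> powi (i0 + int k)) | i0 n c. True}"

end

theory Submission
  imports Defs
begin

definition sos4 :: "int \<Rightarrow> bool" where
  "sos4 n \<longleftrightarrow> (\<exists>a b c d. n = a\<^sup>2 + b\<^sup>2 + c\<^sup>2 + d\<^sup>2)"

lemma euler4: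
  fixes a1 a2 a3 a4 b1 b2 b3 b4 :: int
  shows "(a1\<^sup>2+a2\<^sup>2+a3\<^sup>2+a4\<^sup>2) * (b1\<^sup>2+b2\<^sup>2+b3\<^sup>2+b4\<^sup>2) =
    (a1 * b1+a2 * b2+a3 * b3+a4 * b4)\<^sup>2 + (a1 * b2-a2 * b1+a3 * b4-a4 * b3)\<^sup>2
  + (a1 * b3-a3 * b1+a4 * b2-a2 * b4)\<^sup>2 + (a1 * b4-a4 * b1+a2 * b3-a3 * b2)\<^sup>2"
  by (simp add: power2_eq_square algebra_simps)

lemma sos4_mult: "sos4 m \<Longrightarrow> sos4 n \<Longrightarrow> sos4 (m * n)"
  unfolding sos4_def using euler4 by metis

lemma sq_inj_mod:
  fixes p x y :: int
  assumes "prime p" "0 \<le> x" "0 \<le> y" "2 * x < p" "2 * y < p" "x\<^sup>2 mod p = y\<^sup>2 mod p"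
  shows "x = y"
proof -
  have "p dvd x\<^sup>2 - y\<^sup>2" using assms(6) by (simp add: mod_eq_dvd_iff)
  hence "p dvd (x-y) * (x+y)" by (simp add: power2_eq_square algebra_simps)
  hence "p dvd (x-y) \<or> p dvd (x+y)" using assms(1) prime_dvd_mult_iff by blast
  moreover have "p > 1" using assms(1) prime_gt_1_int by blast
  moreover have False if "p dvd (x-y)" "x \<noteq> y"
  proof -
    have "x - y \<noteq> 0" using that by simp
    hence "p \<le> \<bar>x-y\<bar>" using dvd_imp_le_int[OF _ that(1)] by simp
    thus False using assms(2-5) by linarith
  qed
  moreover have False if "p dvd (x+y)" "x \<noteq> y"
  proof -
    have "x + y > 0" using assms(2,3) that(2) by linarith
    hence "p \<le> x+y" using that(1) by (simp add: zdvd_imp_le)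
    thus False using assms(4,5) by linarith
  qed
  ultimately show ?thesis by blast
qed

lemma pigeon:
  fixes p :: int
  assumes "prime p" "odd p"
  shows "\<exists>x y. 0 \<le> x \<and> 0 \<le> y \<and> 2 * x < p \<and> 2 * y < p \<and> p dvd x\<^sup>2 + y\<^sup>2 + 1"
proof -
  define h where "h = (p - 1) div 2"
  have p1: "p > 1" using assms(1) prime_gt_1_int by blast
  have hp: "2 * h + 1 = p" using assms(2) unfolding h_def by (auto elim!: oddE)
  define A where "A = (\<lambda>x. x\<^sup>2 mod p) ` {0..h}"
  define B where "B = (\<lambda>y. (-1 - y\<^sup>2) mod p) ` {0..h}"
  have cA: "card A = nat (h+1)"
  proof -
    have "inj_on (\<lambda>x. x\<^sup>2 mod p) {0..h}"
      proof (rule inj_onI)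
      fix x y assume "x \<in> {0..h}" "y \<in> {0..h}" "x\<^sup>2 mod p = y\<^sup>2 mod p"
      thus "x = y" using sq_inj_mod[OF assms(1), of x y] hp by simp
    qed
    thus ?thesis unfolding A_def by (simp add: card_image)
  qed
  have cB: "card B = nat (h+1)"
  proof -
    have "inj_on (\<lambda>y. (-1 - y\<^sup>2) mod p) {0..h}"
    proof (rule inj_onI)
      fix x y assume xy: "x \<in> {0..h}" "y \<in> {0..h}" "(-1 - x\<^sup>2) mod p = (-1 - y\<^sup>2) mod p"
      hence "p dvd (-1 - x\<^sup>2) - (-1 - y\<^sup>2)" by (simp add: mod_eq_dvd_iff)
      hence "p dvd y\<^sup>2 - x\<^sup>2" by (simp add: algebra_simps)
      hence "y\<^sup>2 mod p = x\<^sup>2 mod p" by (simp add: mod_eq_dvd_iff)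
      thus "x = y" using sq_inj_mod[OF assms(1), of y x] xy hp by simp
    qed
    thus ?thesis unfolding B_def by (simp add: card_image)
  qed
  have sub: "A \<union> B \<subseteq> {0..<p}" unfolding A_def B_def using p1 by (auto intro: pos_mod_bound pos_mod_sign)
  have "A \<inter> B \<noteq> {}"
  proof
    assume dis: "A \<inter> B = {}"
    have fin: "finite A" "finite B" unfolding A_def B_def by auto
    have "card (A \<union> B) = card A + card B" using card_Un_disjoint[OF fin dis] .
    also have "\<dots> = nat p + 1" using cA cB hp p1 by simp
    finally have "card (A \<union> B) = nat p + 1" .
    moreover have "card (A \<union> B) \<le> card {0..<p}" by (rule card_mono) (use sub in auto)
    ultimately show False by simp
  qed
  then obtain x y where xy: "x \<in> {0..h}" "y \<in> {0..h}" "x\<^sup>2 mod p = (-1 - y\<^sup>2) mod p"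
    unfolding A_def B_def by (auto simp del: atLeastAtMost_iff)
  hence "p dvd x\<^sup>2 - (-1 - y\<^sup>2)" by (simp add: mod_eq_dvd_iff)
  hence "p dvd x\<^sup>2 + y\<^sup>2 + 1" by (simp add: algebra_simps)
  thus ?thesis using xy hp by (intro exI[of _ x] exI[of _ y]) auto
qed

lemma sym_mod:
  fixes x m :: int
  assumes "m > 0"
  shows "\<exists>y k. x = y + m * k \<and> 2 * \<bar>y\<bar> \<le> m"
proof -
  define r where "r = x mod m"
  have r: "0 \<le> r" "r < m" "x = r + m * (x div m)" using assms unfolding r_def by auto
  show ?thesis
  proof (cases "2 * r \<le> m")
    case True thus ?thesis using r by (intro exI[of _ r] exI[of _ "x div m"]) auto
  next
    case False thus ?thesis using r
      by (intro exI[of _ "r - m"] exI[of _ "x div m + 1"]) (auto simp: algebra_simps)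
  qed
qed

lemma prime_dvd_cases:
  fixes p m :: int
  assumes "prime p" "m dvd p" "1 < m" "m < p"
  shows False
  using assms by (metis prime_int_iff less_imp_le order.strict_trans zero_less_one order_less_irrefl)

lemma sq_le_half:
  fixes y m :: int
  assumes "2 * \<bar>y\<bar> \<le> m"
  shows "4 * y\<^sup>2 \<le> m\<^sup>2"
proof -
  have "(2 * \<bar>y\<bar>)\<^sup>2 \<le> m\<^sup>2" using assms by (intro power_mono) auto
  thus ?thesis by (simp add: power2_eq_square)
qed

lemma descent_step:
  fixes p m x1 x2 x3 x4 :: int
  assumes "prime p" "1 < m" "m < p" and hx: "m * p = x1\<^sup>2+x2\<^sup>2+x3\<^sup>2+x4\<^sup>2"
  shows "\<exists>r. 0 < r \<and> r < m \<and> sos4 (r * p)"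
proof -
  have m0: "m > 0" using assms by simp
  obtain y1 k1 where 1: "x1 = y1 + m * k1" "2 * \<bar>y1\<bar> \<le> m" using sym_mod[OF m0] by blast
  obtain y2 k2 where 2: "x2 = y2 + m * k2" "2 * \<bar>y2\<bar> \<le> m" using sym_mod[OF m0] by blast
  obtain y3 k3 where 3: "x3 = y3 + m * k3" "2 * \<bar>y3\<bar> \<le> m" using sym_mod[OF m0] by blast
  obtain y4 k4 where 4: "x4 = y4 + m * k4" "2 * \<bar>y4\<bar> \<le> m" using sym_mod[OF m0] by blast
  define S where "S = y1\<^sup>2+y2\<^sup>2+y3\<^sup>2+y4\<^sup>2"
  define r where "r = p - 2 * (x1 * k1+x2 * k2+x3 * k3+x4 * k4) + m * (k1\<^sup>2+k2\<^sup>2+k3\<^sup>2+k4\<^sup>2)"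
  have Sr: "S = m * r"
  proof -
    have "S = (x1 - m * k1)\<^sup>2+(x2 - m * k2)\<^sup>2+(x3 - m * k3)\<^sup>2+(x4 - m * k4)\<^sup>2"
      unfolding S_def using 1 2 3 4 by simp
    also have "\<dots> = (x1\<^sup>2+x2\<^sup>2+x3\<^sup>2+x4\<^sup>2) - m * (2 * (x1 * k1+x2 * k2+x3 * k3+x4 * k4)) + m * (m * (k1\<^sup>2+k2\<^sup>2+k3\<^sup>2+k4\<^sup>2))"
      by (simp add: power2_eq_square algebra_simps)
    also have "\<dots> = m * r" unfolding r_def hx[symmetric] by (simp add: algebra_simps)
    finally show ?thesis .
  qed
  have S0: "S \<ge> 0" unfolding S_def by simp
  have r0: "r \<ge> 0" using S0 Sr m0 by (simp add: zero_le_mult_iff)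
  have q1: "4 * y1\<^sup>2 \<le> m\<^sup>2" "4 * y2\<^sup>2 \<le> m\<^sup>2" "4 * y3\<^sup>2 \<le> m\<^sup>2" "4 * y4\<^sup>2 \<le> m\<^sup>2"
    using sq_le_half 1 2 3 4 by auto
  have "S \<le> m * m" using q1 unfolding S_def by (simp add: power2_eq_square)
  hence rm: "r \<le> m" using Sr m0 by simp
  have "r \<noteq> 0"
  proof
    assume "r = 0"
    hence "S = 0" using Sr by simp
    hence "y1 = 0" "y2 = 0" "y3 = 0" "y4 = 0" unfolding S_def
      by (simp_all add: add_nonneg_eq_0_iff)
    hence "m * p = m * (m * (k1\<^sup>2+k2\<^sup>2+k3\<^sup>2+k4\<^sup>2))" using hx 1 2 3 4 by (simp add: power2_eq_square algebra_simps)
    hence "p = m * (k1\<^sup>2+k2\<^sup>2+k3\<^sup>2+k4\<^sup>2)" using m0 by simp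
    hence "m dvd p" by simp
    thus False using prime_dvd_cases assms by blast
  qed
  moreover have "r \<noteq> m"
  proof
    assume "r = m"
    hence "S = m * m" using Sr by simp
    hence e: "4 * y1\<^sup>2 = m\<^sup>2" "4 * y2\<^sup>2 = m\<^sup>2" "4 * y3\<^sup>2 = m\<^sup>2" "4 * y4\<^sup>2 = m\<^sup>2"
      using q1 unfolding S_def by (simp_all add: power2_eq_square)
    have ex: "\<exists>s. 2 * y = m * s" if "4 * y\<^sup>2 = m\<^sup>2" for y
    proof -
      have "(2 * \<bar>y\<bar>)\<^sup>2 = m\<^sup>2" using that by (simp add: power2_eq_square)
      hence "2 * \<bar>y\<bar> = m" using m0 power2_eq_iff_nonneg[of "2 * \<bar>y\<bar>" m] by linarith
      thus ?thesis by (cases "y \<ge> 0") (auto intro: exI[of _ 1] exI[of _ "-1"])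
    qed
    obtain s1 s2 s3 s4 where s: "2 * y1 = m * s1" "2 * y2 = m * s2" "2 * y3 = m * s3" "2 * y4 = m * s4"
      using ex e by metis
    have "m * p = S + m * (2 * y1 * k1+2 * y2 * k2+2 * y3 * k3+2 * y4 * k4) + m * (m * (k1\<^sup>2+k2\<^sup>2+k3\<^sup>2+k4\<^sup>2))"
      unfolding hx S_def using 1 2 3 4 by (simp add: power2_eq_square algebra_simps)
    also have "\<dots> = m * (m * (1 + (s1 * k1+s2 * k2+s3 * k3+s4 * k4) + (k1\<^sup>2+k2\<^sup>2+k3\<^sup>2+k4\<^sup>2)))"
      unfolding \<open>S = m * m\<close> s by (simp add: algebra_simps)
    finally have "p = m * (1 + (s1 * k1+s2 * k2+s3 * k3+s4 * k4) + (k1\<^sup>2+k2\<^sup>2+k3\<^sup>2+k4\<^sup>2))"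
      using m0 by simp
    hence "m dvd p" by simp
    thus False using prime_dvd_cases assms by blast
  qed
  moreover have "sos4 (r * p)"
  proof -
    define w1 where "w1 = p - (x1 * k1+x2 * k2+x3 * k3+x4 * k4)"
    define w2 where "w2 = x2 * k1 - x1 * k2 + x4 * k3 - x3 * k4"
    define w3 where "w3 = x3 * k1 - x1 * k3 + x2 * k4 - x4 * k2"
    define w4 where "w4 = x4 * k1 - x1 * k4 + x3 * k2 - x2 * k3"
    have yy: "y1 = x1 - m * k1" "y2 = x2 - m * k2" "y3 = x3 - m * k3" "y4 = x4 - m * k4" using 1 2 3 4 by simp_all
    have z1: "x1 * y1+x2 * y2+x3 * y3+x4 * y4 = m * w1"
      unfolding yy w1_def using hx by (simp add: power2_eq_square algebra_simps)
    have z2: "x1 * y2-x2 * y1+x3 * y4-x4 * y3 = m * w2"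
      unfolding yy w2_def by (simp add: algebra_simps)
    have z3: "x1 * y3-x3 * y1+x4 * y2-x2 * y4 = m * w3"
      unfolding yy w3_def by (simp add: algebra_simps)
    have z4: "x1 * y4-x4 * y1+x2 * y3-x3 * y2 = m * w4"
      unfolding yy w4_def by (simp add: algebra_simps)
    have "(m * p) * (m * r) = (m * w1)\<^sup>2 + (m * w2)\<^sup>2 + (m * w3)\<^sup>2 + (m * w4)\<^sup>2"
      using euler4[of x1 x2 x3 x4 y1 y2 y3 y4] unfolding hx Sr[symmetric] S_def z1 z2 z3 z4 by simp
    hence "(m * m) * (r * p) = (m * m) * (w1\<^sup>2 + w2\<^sup>2 + w3\<^sup>2 + w4\<^sup>2)"
      by (simp add: power2_eq_square algebra_simps)
    hence "r * p = w1\<^sup>2 + w2\<^sup>2 + w3\<^sup>2 + w4\<^sup>2" using m0 by simp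
    thus ?thesis unfolding sos4_def by blast
  qed
  ultimately show ?thesis using r0 rm by (intro exI[of _ r]) auto
qed

lemma sos4_prime_aux:
  fixes p :: int
  assumes "prime p"
  shows "\<forall>m. int n = m \<longrightarrow> 0 < m \<longrightarrow> m < p \<longrightarrow> sos4 (m * p) \<longrightarrow> sos4 p"
proof (induction n rule: less_induct)
  case (less n)
  show ?case
  proof (intro allI impI)
    fix m assume h: "int n = m" "0 < m" "m < p" "sos4 (m * p)"
    show "sos4 p"
    proof (cases "m = 1")
      case True thus ?thesis using h by simp
    next
      case False
      then obtain x1 x2 x3 x4 where "m * p = x1\<^sup>2+x2\<^sup>2+x3\<^sup>2+x4\<^sup>2" using h unfolding sos4_def by blast
      moreover have "1 < m" using h False by simp
      ultimately obtain r where r: "0 < r" "r < m" "sos4 (r * p)"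
        using descent_step[OF assms, of m] h by blast
      have "nat r < n" using r h by linarith
      thus ?thesis using less[of "nat r"] r h by auto
    qed
  qed
qed

lemma sos4_prime:
  fixes p :: int
  assumes "prime p"
  shows "sos4 p"
proof (cases "p = 2")
  case True
  thus ?thesis unfolding sos4_def by (intro exI[of _ 1] exI[of _ 1] exI[of _ 0]) simp
next
  case False
  have p1: "p > 1" using assms prime_gt_1_int by blast
  have "odd p" using False assms prime_odd_int[of p] p1 by simp
  then obtain x y where xy: "0 \<le> x" "0 \<le> y" "2 * x < p" "2 * y < p" "p dvd x\<^sup>2 + y\<^sup>2 + 1"
    using pigeon[OF assms] by blast
  then obtain m where m: "x\<^sup>2 + y\<^sup>2 + 1 = p * m" by (auto elim: dvdE)
  have "4 * x\<^sup>2 < p\<^sup>2" "4 * y\<^sup>2 < p\<^sup>2"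
    using xy power_strict_mono[of "2 * x" p 2] power_strict_mono[of "2 * y" p 2]
    by (simp_all add: power_mult_distrib)
  moreover have "p * p \<ge> 2 * p" using p1 by (intro mult_right_mono) auto
  ultimately have "p * m < p * p" using m p1 unfolding power2_eq_square by linarith
  hence mp: "m < p" using p1 by simp
  have "p * m > 0" using m[symmetric] by (simp add: add_nonneg_pos)
  hence m0: "m > 0" using p1 by (simp add: zero_less_mult_iff)
  have "sos4 (m * p)" unfolding sos4_def using m
    by (intro exI[of _ x] exI[of _ y] exI[of _ 1] exI[of _ 0]) (simp add: algebra_simps)
  thus ?thesis using sos4_prime_aux[OF assms, of "nat m"] m0 mp by simp
qed

lemma sos4_nonneg_aux: "\<forall>k. int n = k \<longrightarrow> sos4 k"
proof (induction n rule: less_induct)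
  case (less n)
  show ?case
  proof (intro allI impI)
    fix k assume k: "int n = k"
    show "sos4 k"
    proof (cases "k \<le> 1")
      case True
      hence "k = 0 \<or> k = 1" using k by linarith
      moreover have "(0::int) = 0\<^sup>2+0\<^sup>2+0\<^sup>2+0\<^sup>2" by simp
      hence "sos4 0" unfolding sos4_def by blast
      moreover have "(1::int) = 1\<^sup>2+0\<^sup>2+0\<^sup>2+0\<^sup>2" by simp
      hence "sos4 1" unfolding sos4_def by blast
      ultimately show ?thesis by auto
    next
      case False
      then obtain p where p: "prime p" "p dvd k" using prime_divisor_exists[of k] by auto
      then obtain j where j: "k = p * j" by (auto elim: dvdE)
      have p1: "p > 1" using p prime_gt_1_int by blast
      have "p * j > 0" using j False by simp
      hence "j > 0" using p1 by (simp add: zero_less_mult_iff)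
      moreover have "1 * j < p * j" using p1 \<open>j > 0\<close> by (intro mult_strict_right_mono) auto
      hence "j < k" using j by simp
      ultimately have "sos4 j" using less[of "nat j"] k by auto
      thus ?thesis using sos4_mult[OF sos4_prime[OF p(1)]] j by simp
    qed
  qed
qed

lemma four_squares: "(k::int) \<ge> 0 \<Longrightarrow> sos4 k"
  using sos4_nonneg_aux[of "nat k"] by simp


lemma sqrt_irrat:
  fixes D :: int
  assumes "D > 1" "squarefree D"
  shows "sqrt (real_of_int D) \<notin> \<rat>"
proof
  assume r: "sqrt (real_of_int D) \<in> \<rat>"
  have "algebraic_int (sqrt (real_of_int D))" by (intro algebraic_int_sqrt) simp
  hence "sqrt (real_of_int D) \<in> \<int>" using r rational_algebraic_int_is_int by blast
  then obtain k where k: "sqrt (real_of_int D) = of_int k" by (auto elim: Ints_cases)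
  have "real_of_int D = (sqrt (real_of_int D))\<^sup>2" using assms by simp
  also have "\<dots> = real_of_int (k\<^sup>2)" using k by simp
  finally have Dk: "D = k\<^sup>2" by linarith
  hence "k dvd 1" using assms(2) unfolding squarefree_def by auto
  hence "k\<^sup>2 = 1" by (simp add: power2_eq_square) (metis mult.left_neutral unit_prod zdvd1_eq abs_mult_self_eq)
  thus False using Dk assms by simp
qed

lemma span_powers:
  fixes x :: real and P :: "real poly"
  assumes P: "poly P x = 0" "lead_coeff P = 1" "\<forall>i. coeff P i \<in> \<int>" and n: "degree P = Suc m"
  shows "\<exists>c::nat \<Rightarrow> int. x ^ k = (\<Sum>j<Suc m. of_int (c j) * x ^ j)"
proof (induction k)
  case 0
  show ?case
    by (rule exI[of _ "\<lambda>j. if j = 0 then 1 else 0"]) (simp add: sum.lessThan_Suc_shift del: sum.lessThan_Suc)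
next
  case (Suc k)
  then obtain c where c: "x ^ k = (\<Sum>j<Suc m. of_int (c j) * x ^ j)" by blast
  obtain cP where cP: "\<And>i. coeff P i = of_int (cP i)"
  proof -
    have "\<forall>i. \<exists>z. coeff P i = of_int z" using P(3) by (auto elim!: Ints_cases)
    then show ?thesis using that by metis
  qed
  have top: "coeff P (Suc m) = 1" using P(2) n by simp
  have "0 = (\<Sum>i\<le>Suc m. coeff P i * x ^ i)" using P(1) n by (simp add: poly_altdef)
  also have "\<dots> = (\<Sum>i<Suc m. coeff P i * x ^ i) + x ^ Suc m"
    using top by (simp add: atMost_Suc lessThan_Suc_atMost[symmetric] del: sum.lessThan_Suc) (simp add: lessThan_Suc_atMost)
  finally have xm: "x ^ Suc m = - (\<Sum>i<Suc m. of_int (cP i) * x ^ i)" by (simp add: cP)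
  define c' where "c' = (\<lambda>j. (if j = 0 then 0 else c (j - 1)) - c m * cP j)"
  have "x ^ Suc k = x * (\<Sum>j<Suc m. of_int (c j) * x ^ j)" using c by simp
  also have "\<dots> = (\<Sum>j<m. of_int (c j) * x ^ Suc j) + of_int (c m) * x ^ Suc m"
    by (simp add: sum_distrib_left algebra_simps)
  also have "\<dots> = (\<Sum>j<Suc m. of_int (if j = 0 then 0 else c (j - 1)) * x ^ j) - of_int (c m) * (\<Sum>i<Suc m. of_int (cP i) * x ^ i)"
    unfolding xm by (simp add: sum.lessThan_Suc_shift del: sum.lessThan_Suc) (simp add: algebra_simps)
  also have "\<dots> = (\<Sum>j<Suc m. of_int (c' j) * x ^ j)"
    unfolding c'_def by (simp add: sum_distrib_left sum_subtractf algebra_simps)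
  finally show ?case by blast
qed

lemma common_denom:
  fixes f :: "nat \<Rightarrow> real"
  assumes "\<forall>j<n. f j \<in> \<rat>"
  shows "\<exists>L::int. L > 0 \<and> (\<forall>j<n. of_int L * f j \<in> \<int>)"
  using assms
proof (induction n)
  case 0 thus ?case by (intro exI[of _ 1]) auto
next
  case (Suc n)
  then obtain L where L: "L > 0" "\<forall>j<n. of_int L * f j \<in> \<int>" by auto
  have "f n \<in> \<rat>" using Suc.prems by auto
  then obtain a b where ab: "b > 0" "f n = of_int a / of_int b" by (auto elim: Rats_cases')
  have "\<forall>j<Suc n. of_int (L*b) * f j \<in> \<int>"
  proof (intro allI impI)
    fix j assume "j < Suc n"
    show "of_int (L*b) * f j \<in> \<int>"
    proof (cases "j = n")
      case True
      have "of_int b * f n = of_int a" using ab by simp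
      hence "of_int (L*b) * f j = of_int (L*a)" using True by (simp add: algebra_simps)
      thus ?thesis by (metis Ints_of_int)
    next
      case False
      hence "of_int L * f j \<in> \<int>" using L \<open>j < Suc n\<close> by auto
      hence "of_int b * (of_int L * f j) \<in> \<int>" by simp
      thus ?thesis by (simp add: algebra_simps)
    qed
  qed
  thus ?case using L ab by (intro exI[of _ "L*b"]) auto
qed

lemma bounded_den_int:
  fixes y :: real and L :: int
  assumes "y \<in> \<rat>" "L \<noteq> 0" "\<forall>k. of_int L * y ^ k \<in> \<int>"
  shows "y \<in> \<int>"
proof -
  obtain a b where ab: "b > 0" "coprime a b" "y = of_int a / of_int b" using assms(1) by (auto elim: Rats_cases')
  have "b dvd 1"
  proof (rule ccontr)
    assume nb: "\<not> b dvd 1"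
    have "b \<noteq> 1" using nb by auto
    hence b2: "b \<ge> 2" using ab(1) by linarith
    define k where "k = nat \<bar>L\<bar>"
    obtain z where z: "of_int L * y ^ k = of_int z" using assms(3) by (auto elim!: Ints_cases)
    hence "of_int L * of_int a ^ k = of_int z * (of_int b ^ k :: real)"
      using ab by (simp add: power_divide field_simps)
    hence "L * a ^ k = z * b ^ k" by (metis of_int_eq_iff of_int_mult of_int_power)
    hence "b ^ k dvd L * a ^ k" by simp
    moreover have "coprime (b ^ k) (a ^ k)" using ab(2) by (simp add: coprime_commute)
    ultimately have "b ^ k dvd L" using coprime_dvd_mult_left_iff by blast
    hence "\<bar>b ^ k\<bar> \<le> \<bar>L\<bar>" using assms(2) dvd_imp_le_int by blast
    hence "b ^ k \<le> \<bar>L\<bar>" by simp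
    moreover have "(2::int) ^ k \<le> b ^ k" using b2 by (intro power_mono) auto
    moreover have "int k < 2 ^ k" by (metis of_nat_less_two_power)
    ultimately show False unfolding k_def by simp
  qed
  hence "b = 1" using ab(1) by simp
  thus ?thesis using ab by simp
qed

locale qf =
  fixes D :: int
  assumes D1: "D > 1" and sqf: "squarefree D"
begin

abbreviation s where "s \<equiv> sqrt (real_of_int D)"

lemma s_sq: "s * s = real_of_int D"
  using D1 by simp

lemma s_irr: "s \<notin> \<rat>" using sqrt_irrat[OF D1 sqf] .

lemma lin_zero:
  assumes "a \<in> \<rat>" "b \<in> \<rat>" "a + b * s = 0"
  shows "a = 0 \<and> b = 0"
proof (cases "b = 0")
  case True thus ?thesis using assms by simp
next
  case False
  hence "s = - a / b" using assms(3) by (simp add: field_simps)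
  hence "s \<in> \<rat>" using assms by simp
  thus ?thesis using s_irr by blast
qed

lemma lin_eq:
  assumes "a \<in> \<rat>" "b \<in> \<rat>" "c \<in> \<rat>" "d \<in> \<rat>" "a + b * s = c + d * s"
  shows "a = c \<and> b = d"
  using lin_zero[of "a - c" "b - d"] assms by (simp add: algebra_simps)

lemma qf_iff: "x \<in> quad_field D \<longleftrightarrow> (\<exists>a\<in>\<rat>. \<exists>b\<in>\<rat>. x = a + b * s)"
  unfolding quad_field_def by (auto elim!: Rats_cases) (metis Rats_of_rat)

lemma qconj_eq:
  assumes "a \<in> \<rat>" "b \<in> \<rat>"
  shows "qconj D (a + b * s) = a - b * s"
proof -
  from assms obtain p q where pq: "a = of_rat p" "b = of_rat q" by (auto elim!: Rats_cases)
  show ?thesis unfolding qconj_def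
  proof (rule the_equality)
    show "\<exists>p q. a + b * s = of_rat p + of_rat q * s \<and> a - b * s = of_rat p - of_rat q * s"
      using pq by blast
  next
    fix y assume "\<exists>p q. a + b * s = of_rat p + of_rat q * s \<and> y = of_rat p - of_rat q * s"
    then obtain p' q' where h: "a + b * s = of_rat p' + of_rat q' * s" "y = of_rat p' - of_rat q' * s" by blast
    have "a = of_rat p' \<and> b = of_rat q'" using lin_eq[OF assms _ _ h(1)] by simp
    thus "y = a - b * s" using h by simp
  qed
qed

lemma poly_conj:
  assumes "\<forall>i. coeff P i \<in> \<rat>" "a \<in> \<rat>" "b \<in> \<rat>"
  shows "\<exists>A\<in>\<rat>. \<exists>B\<in>\<rat>. poly P (a + b * s) = A + B * s \<and> poly P (a - b * s) = A - B * s"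
  using assms(1)
proof (induction P)
  case 0
  thus ?case by (intro bexI[of _ 0]) auto
next
  case (pCons c P)
  have c: "c \<in> \<rat>" using pCons.prems[rule_format, of 0] by simp
  have "\<forall>i. coeff P i \<in> \<rat>" using pCons.prems[rule_format, of "Suc _"] by simp
  then obtain A B where AB: "A \<in> \<rat>" "B \<in> \<rat>" "poly P (a + b * s) = A + B * s" "poly P (a - b * s) = A - B * s"
    using pCons.IH by blast
  show ?case
  proof (intro bexI conjI)
    have m1: "(a + b * s) * (A + B * s) = a * A + b * B * (s * s) + (a * B + b * A) * s" by (simp add: algebra_simps)
    have m2: "(a - b * s) * (A - B * s) = a * A + b * B * (s * s) - (a * B + b * A) * s" by (simp add: algebra_simps)
    show "poly (pCons c P) (a + b * s) = (c + a*A + b*B*real_of_int D) + (a*B + b*A) * s"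
      using AB(3) m1 unfolding s_sq by simp
    show "poly (pCons c P) (a - b * s) = (c + a*A + b*B*real_of_int D) - (a*B + b*A) * s"
      using AB(4) m2 unfolding s_sq by simp
  qed (use c AB assms in auto)
qed

lemma int_sum_scaled:
  fixes c :: "nat \<Rightarrow> int" and f :: "nat \<Rightarrow> real"
  assumes "\<forall>j<n. of_int L * f j \<in> \<int>"
  shows "of_int L * (\<Sum>j<n. of_int (c j) * f j) \<in> \<int>"
proof -
  have "of_int L * (\<Sum>j<n. of_int (c j) * f j) = (\<Sum>j<n. of_int (c j) * (of_int L * f j))"
    by (simp add: sum_distrib_left algebra_simps)
  also have "\<dots> \<in> \<int>" using assms by (intro Ints_sum) auto
  finally show ?thesis .
qed

lemma norm_int:
  assumes ab: "a \<in> \<rat>" "b \<in> \<rat>" and ai: "algebraic_int (a + b * s)"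
  shows "a * a - b * b * of_int D \<in> \<int>"
proof -
  define x where "x = a + b * s"
  define x' where "x' = a - b * s"
  obtain P where P: "lead_coeff P = 1" "\<forall>i. coeff P i \<in> \<int>" "poly P x = 0"
    using ai unfolding x_def by (auto elim: algebraic_int.cases)
  have "degree P \<noteq> 0"
  proof
    assume "degree P = 0"
    hence "poly P x = lead_coeff P" by (metis degree_0_id poly_const_conv)
    thus False using P by simp
  qed
  then obtain m where m: "degree P = Suc m" using not0_implies_Suc by blast
  have Pq: "\<forall>i. coeff P i \<in> \<rat>" using P(2) Ints_subset_Rats by blast
  obtain A B where AB: "A \<in> \<rat>" "B \<in> \<rat>" "poly P x = A + B * s" "poly P x' = A - B * s"
    using poly_conj[OF Pq ab] unfolding x_def x'_def by blast
  have "A = 0 \<and> B = 0" using lin_zero[OF AB(1,2)] AB(3) P(3) by simp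
  hence P': "poly P x' = 0" using AB(4) by simp
  have "\<forall>j. \<exists>A\<in>\<rat>. \<exists>B\<in>\<rat>. x ^ j = A + B * s \<and> x' ^ j = A - B * s"
  proof
    fix j
    have "\<forall>i. coeff (monom (1::real) j) i \<in> \<rat>" by (simp add: coeff_monom)
    from poly_conj[OF this ab] show "\<exists>A\<in>\<rat>. \<exists>B\<in>\<rat>. x ^ j = A + B * s \<and> x' ^ j = A - B * s"
      unfolding x_def x'_def by (simp add: poly_monom)
  qed
  then obtain Af Bf where AfBf: "\<And>j. Af j \<in> \<rat>" "\<And>j. Bf j \<in> \<rat>"
    "\<And>j. x ^ j = Af j + Bf j * s" "\<And>j. x' ^ j = Af j - Bf j * s"
    by metis
  obtain L1 where L1: "L1 > 0" "\<forall>j<Suc m. of_int L1 * Af j \<in> \<int>"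
    using common_denom[of "Suc m" Af] AfBf(1) by blast
  obtain L2 where L2: "L2 > 0" "\<forall>j<Suc m. of_int L2 * Bf j \<in> \<int>"
    using common_denom[of "Suc m" Bf] AfBf(2) by blast
  define L where "L = L1 * L2"
  have LA: "\<forall>j<Suc m. of_int L * Af j \<in> \<int>"
  proof (intro allI impI)
    fix j assume "j < Suc m"
    hence "of_int L2 * (of_int L1 * Af j) \<in> \<int>" using L1 by simp
    thus "of_int L * Af j \<in> \<int>" unfolding L_def by (simp add: algebra_simps)
  qed
  have LB: "\<forall>j<Suc m. of_int L * Bf j \<in> \<int>"
  proof (intro allI impI)
    fix j assume "j < Suc m"
    hence "of_int L1 * (of_int L2 * Bf j) \<in> \<int>" using L2 by simp
    thus "of_int L * Bf j \<in> \<int>" unfolding L_def by (simp add: algebra_simps)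
  qed
  define N where "N = a * a - b * b * of_int D"
  have Nx: "N = x * x'" unfolding N_def x_def x'_def
    using s_sq by (simp add: algebra_simps)
  have Nq: "N \<in> \<rat>" unfolding N_def using ab by simp
  have "\<forall>k. of_int (L*L) * N ^ k \<in> \<int>"
  proof
    fix k
    obtain c where c: "x ^ k = (\<Sum>j<Suc m. of_int (c j) * x ^ j)"
      using span_powers[OF P(3) P(1) P(2) m] by blast
    obtain c' where c': "x' ^ k = (\<Sum>j<Suc m. of_int (c' j) * x' ^ j)"
      using span_powers[OF P' P(1) P(2) m] by blast
    define U where "U = (\<Sum>j<Suc m. of_int (c j) * Af j)"
    define V where "V = (\<Sum>j<Suc m. of_int (c j) * Bf j)"
    define U' where "U' = (\<Sum>j<Suc m. of_int (c' j) * Af j)"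
    define V' where "V' = (\<Sum>j<Suc m. of_int (c' j) * Bf j)"
    have "x ^ k = (\<Sum>j<Suc m. of_int (c j) * (Af j + Bf j * s))" unfolding c
      by (intro sum.cong refl) (simp only: AfBf(3))
    also have "\<dots> = U + V * s" unfolding U_def V_def
      by (simp add: distrib_left sum.distrib sum_distrib_right mult.assoc del: sum.lessThan_Suc)
    finally have xk: "x ^ k = U + V * s" .
    have "x' ^ k = (\<Sum>j<Suc m. of_int (c' j) * (Af j - Bf j * s))" unfolding c'
      by (intro sum.cong refl) (simp only: AfBf(4))
    also have "\<dots> = U' - V' * s" unfolding U'_def V'_def
      by (simp add: right_diff_distrib sum_subtractf sum_distrib_right mult.assoc del: sum.lessThan_Suc)
    finally have xk': "x' ^ k = U' - V' * s" .
    have UQ: "U \<in> \<rat>" "V \<in> \<rat>" "U' \<in> \<rat>" "V' \<in> \<rat>"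
      unfolding U_def V_def U'_def V'_def using AfBf(1,2) by (auto intro!: Rats_sum simp del: sum.lessThan_Suc)
    have "N ^ k = x ^ k * x' ^ k" unfolding Nx by (simp add: power_mult_distrib)
    also have "\<dots> = (U*U' - V*V' * (s * s)) + (V*U' - U*V') * s" unfolding xk xk'
      by (simp add: algebra_simps)
    finally have eq: "N ^ k + 0 * s = (U*U' - V*V' * of_int D) + (V*U' - U*V') * s" using s_sq by simp
    have "N ^ k = U*U' - V*V' * of_int D \<and> 0 = V*U' - U*V'"
      by (rule lin_eq[OF _ _ _ _ eq]) (use Nq UQ in auto)
    hence Nk: "N ^ k = U*U' - V*V' * of_int D" by simp
    have I: "of_int L * U \<in> \<int>" "of_int L * V \<in> \<int>" "of_int L * U' \<in> \<int>" "of_int L * V' \<in> \<int>"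
      unfolding U_def V_def U'_def V'_def using int_sum_scaled[OF LA] int_sum_scaled[OF LB] by blast+
    have "of_int (L*L) * N ^ k = (of_int L * U) * (of_int L * U') - (of_int L * V) * (of_int L * V') * of_int D"
      unfolding Nk by (simp add: algebra_simps)
    also have "\<dots> \<in> \<int>" using I by simp
    finally show "of_int (L*L) * N ^ k \<in> \<int>" .
  qed
  moreover have "L*L \<noteq> 0" using L1 L2 unfolding L_def by simp
  ultimately show ?thesis using bounded_den_int[OF Nq] unfolding N_def by blast
qed

lemma eps_facts:
  assumes "tp_fund_unit D \<epsilon>"
  shows "\<exists>t::int. \<epsilon> * \<epsilon> = of_int t * \<epsilon> - 1 \<and> \<epsilon> > 1 \<and> (\<exists>a\<in>\<rat>. \<exists>b\<in>\<rat>. \<epsilon> = a + b * s)"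
proof -
  have u: "\<epsilon> \<in> ring_of_integers D" "\<epsilon> \<noteq> 0" "inverse \<epsilon> \<in> ring_of_integers D"
    and e1: "\<epsilon> > 1" and qc: "qconj D \<epsilon> > 0"
    using assms unfolding tp_fund_unit_def units_OK_def by auto
  obtain a b where ab: "a \<in> \<rat>" "b \<in> \<rat>" "\<epsilon> = a + b * s"
    using u(1) unfolding ring_of_integers_def qf_iff by blast
  obtain c d where cd: "c \<in> \<rat>" "d \<in> \<rat>" "inverse \<epsilon> = c + d * s"
    using u(3) unfolding ring_of_integers_def qf_iff by blast
  have ai: "algebraic_int \<epsilon>" "algebraic_int (inverse \<epsilon>)"
    using u unfolding ring_of_integers_def by auto
  have "1 = \<epsilon> * inverse \<epsilon>" using u(2) by simp
  also have "\<dots> = \<epsilon> * (c + d * s)" by (simp only: cd(3))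
  also have "\<dots> = (a + b * s) * (c + d * s)" by (simp only: ab(3))
  also have "\<dots> = (a*c + b*d * (s * s)) + (a*d + b*c) * s" by (simp add: algebra_simps)
  finally have eq: "1 + 0 * s = (a*c + b*d * of_int D) + (a*d + b*c) * s" using s_sq by simp
  have r: "1 = a*c + b*d * of_int D \<and> 0 = a*d + b*c"
    by (rule lin_eq[OF _ _ _ _ eq]) (use ab cd in auto)
  have N1: "a * a - b * b * of_int D \<in> \<int>" using norm_int[OF ab(1,2)] ai(1) ab(3) by simp
  have N2: "c * c - d * d * of_int D \<in> \<int>" using norm_int[OF cd(1,2)] ai(2) cd(3) by simp
  have prod: "(a * a - b * b * of_int D) * (c * c - d * d * of_int D) = 1"
  proof -
    have "(a * a - b * b * of_int D) * (c * c - d * d * of_int D)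
        = (a*c + b*d * of_int D)^2 - of_int D * (a*d + b*c)^2"
      by (simp add: power2_eq_square algebra_simps)
    thus ?thesis using r by simp
  qed
  have "qconj D \<epsilon> = a - b * s" using qconj_eq[OF ab(1,2)] ab(3) by simp
  hence "a - b * s > 0" using qc by simp
  moreover have "a + b * s > 0" using e1 ab(3) by simp
  ultimately have "(a + b * s) * (a - b * s) > 0" by simp
  moreover have "(a + b * s) * (a - b * s) = a * a - b * b * (s * s)" by (simp add: algebra_simps)
  ultimately have Npos: "a * a - b * b * of_int D > 0" using s_sq by simp
  obtain n1 where n1: "a * a - b * b * of_int D = of_int n1" using N1 by (auto elim!: Ints_cases)
  obtain n2 where n2: "c * c - d * d * of_int D = of_int n2" using N2 by (auto elim!: Ints_cases)
  have "n1 * n2 = 1" using prod n1 n2 by (metis of_int_eq_1_iff of_int_mult)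
  moreover have "n1 > 0" using Npos n1 by simp
  ultimately have "n1 = 1" using pos_zmult_eq_1_iff by blast
  hence Nis1: "a * a - b * b * of_int D = 1" using n1 by simp
  have ai1: "algebraic_int (\<epsilon> + 1)"
    by (rule algebraic_int_root[OF ai(1), of "[:-1, 1:]"]) (auto simp: coeff_pCons split: nat.splits)
  have "(a + 1) * (a + 1) - b * b * of_int D \<in> \<int>"
    using norm_int[of "a + 1" b] ab ai1 by (simp add: algebra_simps)
  hence "((a + 1) * (a + 1) - b * b * of_int D) - 2 \<in> \<int>" by (metis Ints_diff Ints_numeral)
  moreover have "((a + 1) * (a + 1) - b * b * of_int D) - 2 = 2 * a" using Nis1 by (simp add: algebra_simps)
  ultimately have "2 * a \<in> \<int>" by simp
  then obtain t where t: "2 * a = of_int t" by (auto elim!: Ints_cases)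
  have "\<epsilon> * \<epsilon> = of_int t * \<epsilon> - 1"
  proof -
    have "\<epsilon> * \<epsilon> - (2 * a) * \<epsilon> + 1 = - (a * a - b * b * (s * s)) + 1"
      unfolding ab(3) by (simp add: algebra_simps)
    also have "\<dots> = 0" using Nis1 s_sq by simp
    finally show ?thesis unfolding t by simp
  qed
  thus ?thesis using e1 ab by blast
qed

end


lemma mult_lin:
  fixes z :: real
  assumes "z * z = of_int t * z - 1"
  shows "(of_int a + of_int b * z) * (of_int u + of_int v * z)
       = of_int (a * u - b * v) + of_int (a * v + b * u + b * v * t) * z"
proof -
  have "(of_int a + of_int b * z) * (of_int u + of_int v * z)
      = of_int a * of_int u + (of_int a * of_int v + of_int b * of_int u) * z + of_int b * of_int v * (z * z)"
    by (simp add: algebra_simps)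
  also have "\<dots> = of_int (a * u - b * v) + of_int (a * v + b * u + b * v * t) * z"
    unfolding assms by (simp add: algebra_simps)
  finally show ?thesis .
qed

locale epsl =
  fixes \<epsilon> :: real and t :: int
  assumes e2: "\<epsilon> * \<epsilon> = of_int t * \<epsilon> - 1" and e1: "\<epsilon> > 1"
begin

abbreviation \<gamma> where "\<gamma> \<equiv> inverse \<epsilon>"

lemma e0: "\<epsilon> \<noteq> 0" using e1 by simp

lemma eg: "\<epsilon> * \<gamma> = 1" using e0 by simp

lemma g_eq: "\<gamma> = of_int t - \<epsilon>"
proof -
  have "\<epsilon> * \<gamma> = \<epsilon> * (of_int t - \<epsilon>)" using eg e2 by (simp add: algebra_simps)
  hence "\<epsilon> * (of_int t - \<epsilon>) = 1" using eg by simp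
  thus ?thesis by (rule inverse_unique)
qed

lemma e_eq: "\<epsilon> = of_int t - \<gamma>" using g_eq by simp

lemma g2: "\<gamma> * \<gamma> = of_int t * \<gamma> - 1"
  unfolding g_eq using e2 by (simp add: algebra_simps)

lemma gpos: "\<gamma> > 0" using e1 by simp

lemma g_lt_e: "\<gamma> < \<epsilon>"
proof -
  have "\<gamma> < 1" using e1 by (simp add: inverse_less_1_iff)
  thus ?thesis using e1 by simp
qed

lemma pow_nat: "\<exists>u v::int. \<epsilon> ^ n = of_int u + of_int v * \<epsilon> \<and> \<gamma> ^ n = of_int u + of_int v * \<gamma>"
proof (induction n)
  case 0
  show ?case by (rule exI[of _ 1], rule exI[of _ 0]) simp
next
  case (Suc n)
  then obtain u v where uv: "\<epsilon> ^ n = of_int u + of_int v * \<epsilon>" "\<gamma> ^ n = of_int u + of_int v * \<gamma>" by blast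
  have "\<epsilon> ^ Suc n = (of_int 0 + of_int 1 * \<epsilon>) * (of_int u + of_int v * \<epsilon>)" using uv by simp
  also have "\<dots> = of_int (0 * u - 1 * v) + of_int (0 * v + 1 * u + 1 * v * t) * \<epsilon>" by (rule mult_lin[OF e2])
  finally have A: "\<epsilon> ^ Suc n = of_int (- v) + of_int (u + v * t) * \<epsilon>" by simp
  have "\<gamma> ^ Suc n = (of_int 0 + of_int 1 * \<gamma>) * (of_int u + of_int v * \<gamma>)" using uv by simp
  also have "\<dots> = of_int (0 * u - 1 * v) + of_int (0 * v + 1 * u + 1 * v * t) * \<gamma>" by (rule mult_lin[OF g2])
  finally have B: "\<gamma> ^ Suc n = of_int (- v) + of_int (u + v * t) * \<gamma>" by simp
  show ?case using A B by blast
qed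

lemma pow_lin: "\<exists>u v::int. \<epsilon> powi j = of_int u + of_int v * \<epsilon> \<and> \<gamma> powi j = of_int u + of_int v * \<gamma>"
proof (cases "j \<ge> 0")
  case True
  then obtain n where "j = int n" by (metis nonneg_eq_int)
  thus ?thesis using pow_nat[of n] by simp
next
  case False
  then obtain n where n: "j = - int n" by (metis neg_0_le_iff_le nonneg_eq_int le_less linorder_not_le minus_minus)
  obtain u v where uv: "\<epsilon> ^ n = of_int u + of_int v * \<epsilon>" "\<gamma> ^ n = of_int u + of_int v * \<gamma>"
    using pow_nat[of n] by blast
  have A: "\<epsilon> powi j = \<gamma> ^ n" unfolding n power_int_minus by (simp add: power_inverse)
  have B: "\<gamma> powi j = \<epsilon> ^ n" unfolding n power_int_minus by (simp add: power_inverse)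
  have "\<epsilon> powi j = of_int u + of_int v * \<gamma>" using A uv(2) by simp
  also have "\<dots> = of_int (u + v * t) + of_int (- v) * \<epsilon>" by (subst g_eq) (simp add: algebra_simps)
  finally have "\<epsilon> powi j = of_int (u + v * t) + of_int (- v) * \<epsilon>" .
  moreover have "\<gamma> powi j = of_int u + of_int v * \<epsilon>" using B uv(1) by simp
  moreover have "of_int u + of_int v * \<epsilon> = of_int (u + v * t) + of_int (- v) * \<gamma>" by (subst e_eq) (simp add: algebra_simps)
  ultimately show ?thesis by (intro exI[of _ "u + v * t"] exI[of _ "- v"]) simp
qed

lemma lin_sum:
  fixes c :: "nat \<Rightarrow> nat" and f :: "nat \<Rightarrow> int"
  shows "\<exists>a b::int. (\<Sum>k<n. real (c k) * \<epsilon> powi f k) = of_int a + of_int b * \<epsilon>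
                  \<and> (\<Sum>k<n. real (c k) * \<gamma> powi f k) = of_int a + of_int b * \<gamma>"
proof (induction n)
  case 0 show ?case by (rule exI[of _ 0], rule exI[of _ 0]) simp
next
  case (Suc n)
  then obtain a b where ab: "(\<Sum>k<n. real (c k) * \<epsilon> powi f k) = of_int a + of_int b * \<epsilon>"
                  "(\<Sum>k<n. real (c k) * \<gamma> powi f k) = of_int a + of_int b * \<gamma>" by blast
  obtain u v where uv: "\<epsilon> powi f n = of_int u + of_int v * \<epsilon>" "\<gamma> powi f n = of_int u + of_int v * \<gamma>"
    using pow_lin by blast
  show ?case
    by (rule exI[of _ "a + int (c n) * u"], rule exI[of _ "b + int (c n) * v"])
       (simp add: ab uv algebra_simps)
qed

lemma powi_exp: "\<epsilon> powi k = exp (of_int k * ln \<epsilon>)"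
proof -
  have "\<epsilon> powi k = \<epsilon> powr of_int k" using powr_real_of_int'[of \<epsilon> k] e1 by simp
  also have "\<dots> = exp (of_int k * ln \<epsilon>)" using e1 by (simp add: powr_def)
  finally show ?thesis .
qed

lemma exists_i:
  assumes "r > 0"
  shows "\<exists>i::int. \<epsilon> powi (2 * i) \<le> r \<and> r \<le> \<epsilon> powi (2 * i + 2)"
proof -
  define L where "L = ln \<epsilon>"
  have L0: "L > 0" unfolding L_def using e1 by simp
  define i where "i = \<lfloor>ln r / (2 * L)\<rfloor>"
  have i1: "of_int i \<le> ln r / (2 * L)" unfolding i_def by simp
  have i2: "ln r / (2 * L) < of_int i + 1" unfolding i_def by linarith
  have a: "of_int (2 * i) * L \<le> ln r" using i1 L0 by (simp add: field_simps)
  have b: "ln r \<le> of_int (2 * i + 2) * L" using i2 L0 by (simp add: field_simps)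
  have "\<epsilon> powi (2 * i) \<le> exp (ln r)" unfolding powi_exp L_def[symmetric] using a by simp
  moreover have "exp (ln r) \<le> \<epsilon> powi (2 * i + 2)" unfolding powi_exp L_def[symmetric] using b by simp
  ultimately show ?thesis using assms by auto
qed

lemma part_a:
  assumes "e \<in> semiring_E \<epsilon>"
  shows "\<exists>i c d :: int. c \<ge> 0 \<and> d \<ge> 0 \<and> e = of_int c * \<epsilon> powi i + of_int d * \<epsilon> powi (i + 1)"
proof -
  obtain i0 n c where e: "e = (\<Sum>k<n. real (c k) * \<epsilon> powi (i0 + int k))"
    using assms unfolding semiring_E_def by blast
  define e' where "e' = (\<Sum>k<n. real (c k) * \<gamma> powi (i0 + int k))"
  obtain a b where ab: "e = of_int a + of_int b * \<epsilon>" "e' = of_int a + of_int b * \<gamma>"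
    using lin_sum[where n=n and c=c and f="\<lambda>k. i0 + int k"] unfolding e e'_def by blast
  have ep: "\<epsilon> powi j > 0" for j using e1 by simp
  have gp: "\<gamma> powi j > 0" for j using gpos by simp
  show ?thesis
  proof (cases "e = 0")
    case True
    thus ?thesis by (intro exI[of _ 0]) simp
  next
    case False
    have enn: "e \<ge> 0" unfolding e using ep by (intro sum_nonneg) (simp add: less_imp_le)
    hence epos: "e > 0" using False by simp
    have e'pos: "e' > 0"
    proof -
      have nn: "e' \<ge> 0" unfolding e'_def using gp by (intro sum_nonneg) (simp add: less_imp_le)
      have "e' \<noteq> 0"
      proof
        assume "e' = 0"
        hence "\<forall>k\<in>{..<n}. real (c k) * \<gamma> powi (i0 + int k) = 0"
          unfolding e'_def using gp by (subst sum_nonneg_eq_0_iff[symmetric]) (auto simp: less_imp_le)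
        hence "\<forall>k\<in>{..<n}. c k = 0" using gp e0 by (simp add: less_imp_neq[symmetric])
        hence "e = 0" unfolding e by simp
        thus False using False by simp
      qed
      thus ?thesis using nn by simp
    qed
    define r where "r = e / e'"
    have r0: "r > 0" unfolding r_def using epos e'pos by simp
    obtain i where i: "\<epsilon> powi (2 * i) \<le> r" "r \<le> \<epsilon> powi (2 * i + 2)" using exists_i[OF r0] by blast
    obtain u v where uv: "\<epsilon> powi (- i) = of_int u + of_int v * \<epsilon>" "\<gamma> powi (- i) = of_int u + of_int v * \<gamma>"
      using pow_lin by blast
    define X where "X = e * \<epsilon> powi (- i)"
    define Y where "Y = e' * \<gamma> powi (- i)"
    define al where "al = a * u - b * v"
    define be where "be = a * v + b * u + b * v * t"
    have X: "X = of_int al + of_int be * \<epsilon>" unfolding X_def ab uv al_def be_def by (rule mult_lin[OF e2])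
    have Y: "Y = of_int al + of_int be * \<gamma>" unfolding Y_def ab uv al_def be_def by (rule mult_lin[OF g2])
    have gi: "\<gamma> powi (- i) = \<epsilon> powi i"
      unfolding power_int_inverse power_int_minus by (rule inverse_inverse_eq)
    have ei: "\<epsilon> powi (- i) * \<epsilon> powi i = 1"
    proof -
      have "\<epsilon> powi (- i + i) = \<epsilon> powi (- i) * \<epsilon> powi i" by (rule power_int_add) (use e0 in simp)
      thus ?thesis by simp
    qed
    have pw: "\<epsilon> powi (2 * i) = \<epsilon> powi i * \<epsilon> powi i"
    proof -
      have "\<epsilon> powi (i + i) = \<epsilon> powi i * \<epsilon> powi i" by (rule power_int_add) (use e0 in simp)
      thus ?thesis by (simp only: mult_2)
    qed
    have "\<epsilon> powi (2 * i + 2) = \<epsilon> powi (2 * i) * \<epsilon> powi 2" by (rule power_int_add) (use e0 in simp)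
    hence pw2: "\<epsilon> powi (2 * i + 2) = \<epsilon> powi i * \<epsilon> powi i * (\<epsilon> * \<epsilon>)"
      unfolding pw by (simp add: power2_eq_square)
    have XY1: "X - Y = of_int be * (\<epsilon> - \<gamma>)" unfolding X Y by (simp add: algebra_simps)
    have XY2: "\<epsilon> * Y - \<gamma> * X = of_int al * (\<epsilon> - \<gamma>)" unfolding X Y using eg by (simp add: algebra_simps)
    have eeq: "e = r * e'" unfolding r_def using e'pos by simp
    have "X - Y = \<epsilon> powi (- i) * (e - e' * \<epsilon> powi (2 * i))"
    proof -
      have "\<epsilon> powi (- i) * (e - e' * \<epsilon> powi (2 * i)) = e * \<epsilon> powi (- i) - e' * \<epsilon> powi i * (\<epsilon> powi (- i) * \<epsilon> powi i)"
        unfolding pw by (simp add: algebra_simps)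
      thus ?thesis unfolding X_def Y_def gi ei by simp
    qed
    also have "\<dots> \<ge> 0"
    proof -
      have "e' * \<epsilon> powi (2 * i) \<le> e' * r" using i(1) e'pos by simp
      hence "e - e' * \<epsilon> powi (2 * i) \<ge> 0" using eeq by (simp add: algebra_simps)
      thus ?thesis using ep[of "- i"] by (intro mult_nonneg_nonneg) auto
    qed
    finally have "of_int be * (\<epsilon> - \<gamma>) \<ge> 0" using XY1 by simp
    hence be0: "be \<ge> 0" using g_lt_e by (simp add: zero_le_mult_iff)
    have "\<epsilon> * Y - \<gamma> * X = (\<gamma> * \<epsilon> powi (- i)) * (e' * \<epsilon> powi (2 * i + 2) - e)"
    proof -
      have "(\<gamma> * \<epsilon> powi (- i)) * (e' * \<epsilon> powi (2 * i + 2) - e)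
          = \<epsilon> * (e' * \<epsilon> powi i) * (\<epsilon> powi (- i) * \<epsilon> powi i) * (\<epsilon> * \<gamma>) - \<gamma> * (e * \<epsilon> powi (- i))"
        unfolding pw2 by (simp add: algebra_simps)
      thus ?thesis unfolding X_def Y_def gi ei eg by simp
    qed
    also have "\<dots> \<ge> 0"
    proof -
      have "e' * r \<le> e' * \<epsilon> powi (2 * i + 2)" using i(2) e'pos by simp
      hence "e' * \<epsilon> powi (2 * i + 2) - e \<ge> 0" using eeq by (simp add: algebra_simps)
      thus ?thesis using ep gpos by simp
    qed
    finally have "of_int al * (\<epsilon> - \<gamma>) \<ge> 0" using XY2 by simp
    hence al0: "al \<ge> 0" using g_lt_e by (simp add: zero_le_mult_iff)
    have "e = X * \<epsilon> powi i" unfolding X_def using ei by (simp add: mult.assoc)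
    also have "\<dots> = of_int al * \<epsilon> powi i + of_int be * \<epsilon> powi (i + 1)"
    proof -
      have "\<epsilon> powi (i + 1) = \<epsilon> powi i * \<epsilon> powi 1" by (rule power_int_add) (use e0 in simp)
      thus ?thesis unfolding X by (simp add: algebra_simps)
    qed
    finally show ?thesis using al0 be0 by blast
  qed
qed

end

context qf
begin

lemma lin_in_OK:
  assumes e2: "\<epsilon> * \<epsilon> = of_int t * \<epsilon> - 1" and ab: "a \<in> \<rat>" "b \<in> \<rat>" "\<epsilon> = a + b * s"
  shows "of_int u + of_int v * \<epsilon> \<in> ring_of_integers D"
proof -
  have "of_int u + of_int v * \<epsilon> = (of_int u + of_int v * a) + (of_int v * b) * s"
    using ab(3) by (simp add: algebra_simps)
  moreover have "of_int u + of_int v * a \<in> \<rat>" "of_int v * b \<in> \<rat>" using ab by auto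
  ultimately have q: "of_int u + of_int v * \<epsilon> \<in> quad_field D" unfolding qf_iff by blast
  define x where "x = of_int u + of_int v * \<epsilon>"
  define P :: "real poly" where "P = [: of_int (u * u + u * v * t + v * v), - of_int (2 * u + v * t), 1 :]"
  have "algebraic_int x"
  proof (rule algebraic_int.intros[of P])
    show "lead_coeff P = 1" unfolding P_def by simp
    show "\<forall>i. coeff P i \<in> \<int>" unfolding P_def
      by (auto simp: coeff_pCons split: nat.splits simp del: of_int_add of_int_mult)
    have "poly P x = x * x - of_int (2 * u + v * t) * x + of_int (u * u + u * v * t + v * v)"
      unfolding P_def by (simp add: algebra_simps)
    also have "\<dots> = of_int v * of_int v * (\<epsilon> * \<epsilon> - of_int t * \<epsilon> + 1)"
      unfolding x_def by (simp add: algebra_simps)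
    also have "\<dots> = 0" using e2 by simp
    finally show "poly P x = 0" .
  qed
  thus ?thesis using q unfolding ring_of_integers_def x_def by blast
qed

end

lemma rep8:
  fixes \<epsilon> :: real
  assumes D: "D > 1" "squarefree D" and e2: "\<epsilon> * \<epsilon> = of_int t * \<epsilon> - 1" and e1: "\<epsilon> > 1"
    and ab: "a \<in> \<rat>" "b \<in> \<rat>" "\<epsilon> = a + b * sqrt (real_of_int D)"
    and A: "A \<ge> 0" and B: "B \<ge> 0"
  shows "\<exists>x :: nat \<Rightarrow> real. (\<forall>j<8. x j \<in> ring_of_integers D) \<and>
    of_int A * (\<epsilon> powi k1)\<^sup>2 + \<epsilon> * (of_int B * (\<epsilon> powi k2)\<^sup>2)
      = (\<Sum>j<4. (x j)\<^sup>2) + \<epsilon> * (\<Sum>j\<in>{4..<8}. (x j)\<^sup>2)"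
proof -
  interpret qf D using D by unfold_locales
  interpret epsl \<epsilon> t using e2 e1 by unfold_locales
  obtain a1 a2 a3 a4 where av: "A = a1\<^sup>2 + a2\<^sup>2 + a3\<^sup>2 + a4\<^sup>2" using four_squares[OF A] unfolding sos4_def by blast
  obtain b1 b2 b3 b4 where bv: "B = b1\<^sup>2 + b2\<^sup>2 + b3\<^sup>2 + b4\<^sup>2" using four_squares[OF B] unfolding sos4_def by blast
  obtain u1 v1 where p1: "\<epsilon> powi k1 = of_int u1 + of_int v1 * \<epsilon>" using pow_lin by blast
  obtain u2 v2 where p2: "\<epsilon> powi k2 = of_int u2 + of_int v2 * \<epsilon>" using pow_lin by blast
  define P where "P = \<epsilon> powi k1"
  define Q where "Q = \<epsilon> powi k2"
  define x where "x = (\<lambda>j. [of_int a1 * P, of_int a2 * P, of_int a3 * P, of_int a4 * P,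
                           of_int b1 * Q, of_int b2 * Q, of_int b3 * Q, of_int b4 * Q] ! j)"
  have memP: "of_int w * P \<in> ring_of_integers D" for w
  proof -
    have "of_int w * P = of_int (w * u1) + of_int (w * v1) * \<epsilon>" unfolding P_def p1 by (simp add: algebra_simps)
    thus ?thesis using lin_in_OK[OF e2 ab, of "w * u1" "w * v1"] by (simp only:)
  qed
  have memQ: "of_int w * Q \<in> ring_of_integers D" for w
  proof -
    have "of_int w * Q = of_int (w * u2) + of_int (w * v2) * \<epsilon>" unfolding Q_def p2 by (simp add: algebra_simps)
    thus ?thesis using lin_in_OK[OF e2 ab, of "w * u2" "w * v2"] by (simp only:)
  qed
  have "\<forall>j<8. x j \<in> ring_of_integers D"
  proof (intro allI impI)
    fix j :: nat assume "j < 8"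
    hence "j \<in> {0,1,2,3,4,5,6,7}" by auto
    thus "x j \<in> ring_of_integers D" unfolding x_def using memP memQ by auto
  qed
  moreover have "(\<Sum>j<4. (x j)\<^sup>2) = of_int A * P\<^sup>2"
    unfolding x_def av by (simp add: eval_nat_numeral power_mult_distrib algebra_simps)
  moreover have "(\<Sum>j\<in>{4..<8}. (x j)\<^sup>2) = of_int B * Q\<^sup>2"
  proof -
    have "{4..<8::nat} = {4,5,6,7}" by auto
    thus ?thesis unfolding x_def bv by (simp add: power_mult_distrib algebra_simps)
  qed
  ultimately show ?thesis unfolding P_def Q_def by metis
qed

theorem lemma9:
  fixes D :: int and \<epsilon> :: real
  assumes "D > 1" and "squarefree D" and "tp_fund_unit D \<epsilon>"
  shows "(\<forall>e \<in> semiring_E \<epsilon>. \<exists>i c d :: int. c \<ge> 0 \<and> d \<ge> 0 \<and>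
            e = of_int c * \<epsilon> powi i + of_int d * \<epsilon> powi (i + 1))
       \<and> (\<forall>e \<in> semiring_E \<epsilon>. \<exists>x :: nat \<Rightarrow> real. (\<forall>j<8. x j \<in> ring_of_integers D) \<and>
            e = (\<Sum>j<4. (x j)\<^sup>2) + \<epsilon> * (\<Sum>j\<in>{4..<8}. (x j)\<^sup>2))"
proof -
  interpret qf D using assms(1,2) by unfold_locales
  obtain t a b where t: "\<epsilon> * \<epsilon> = of_int t * \<epsilon> - 1" "\<epsilon> > 1" and ab: "a \<in> \<rat>" "b \<in> \<rat>" "\<epsilon> = a + b * s"
    using eps_facts[OF assms(3)] by blast
  interpret epsl \<epsilon> t using t by unfold_locales
  have pa: "\<forall>e \<in> semiring_E \<epsilon>. \<exists>i c d :: int. c \<ge> 0 \<and> d \<ge> 0 \<and>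
            e = of_int c * \<epsilon> powi i + of_int d * \<epsilon> powi (i + 1)"
    using part_a by blast
  have pb: "\<exists>x :: nat \<Rightarrow> real. (\<forall>j<8. x j \<in> ring_of_integers D) \<and>
            e = (\<Sum>j<4. (x j)\<^sup>2) + \<epsilon> * (\<Sum>j\<in>{4..<8}. (x j)\<^sup>2)" if he: "e \<in> semiring_E \<epsilon>" for e
  proof -
    obtain i c d :: int where cd: "c \<ge> 0" "d \<ge> 0" "e = of_int c * \<epsilon> powi i + of_int d * \<epsilon> powi (i + 1)"
      using part_a[OF he] by blast
    have sq: "\<epsilon> powi (2 * m) = (\<epsilon> powi m)\<^sup>2" for m
    proof -
      have "\<epsilon> powi (m + m) = \<epsilon> powi m * \<epsilon> powi m" by (rule power_int_add) (use e0 in simp)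
      thus ?thesis by (simp only: mult_2 power2_eq_square)
    qed
    have sh: "\<epsilon> powi (k + 1) = \<epsilon> * \<epsilon> powi k" for k
    proof -
      have "\<epsilon> powi (k + 1) = \<epsilon> powi k * \<epsilon> powi 1" by (rule power_int_add) (use e0 in simp)
      thus ?thesis by simp
    qed
    show ?thesis
    proof (cases "even i")
      case True
      then obtain m where m: "i = 2 * m" by (auto elim: evenE)
      have "e = of_int c * (\<epsilon> powi m)\<^sup>2 + \<epsilon> * (of_int d * (\<epsilon> powi m)\<^sup>2)"
        unfolding cd(3) sh m sq by (simp add: algebra_simps)
      thus ?thesis using rep8[OF assms(1,2) t ab cd(1,2), of m m] by metis
    next
      case False
      then obtain m where m: "i = 2 * m + 1" by (auto elim: oddE)
      have "e = of_int d * (\<epsilon> powi (m + 1))\<^sup>2 + \<epsilon> * (of_int c * (\<epsilon> powi m)\<^sup>2)"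
      proof -
        have "i + 1 = 2 * (m + 1)" using m by simp
        hence "\<epsilon> powi (i + 1) = (\<epsilon> powi (m + 1))\<^sup>2" using sq[of "m + 1"] by (simp only:)
        moreover have "\<epsilon> powi i = \<epsilon> * (\<epsilon> powi m)\<^sup>2" unfolding m sh sq ..
        ultimately show ?thesis unfolding cd(3) by (simp add: algebra_simps)
      qed
      thus ?thesis using rep8[OF assms(1,2) t ab cd(2,1), of "m + 1" m] by metis
    qed
  qed
  show ?thesis using pa pb by blast
qed

end
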